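(* Let $Q_{22}\in\mathbb{S}_q$ with $Q_{22}\succ0$ and $\Xi\in\mathbb{A}_q$. Then the self-adjoint linear operator $X\mapsto Q_{22}X-\Xi XJ_2$ on $\mathbb{R}^{q\times m_2}$ (equipped with the Frobenius inner product), which is the second Fréchet derivative $\partial_b^2\mathcal{L}$ of the Lagrange function with respect to $b$, is positive definite if and only if $\rho(Q_{22}^{-1}\Xi)<1$.
   Context: $\mathbb{S}_k$ and $\mathbb{A}_k$ denote the spaces of real symmetric and real antisymmetric $k\times k$ matrices; $\rho(\cdot)$ is the spectral radius. $m_2$ is even, $\mu_2=m_2/2$, $J_2:=\begin{bmatrix}0&I_{\mu_2}\\-I_{\mu_2}&0\end{bmatrix}$. (For the identification with $\partial_b^2\mathcal L$: $\mathcal L$ depends on $b$ through $\mathcal E$, whose $b$-derivative is $Q_{22}b$, and through the term $\frac12\langle\Xi,bJ_2b^{T}\rangle+\langle\Gamma,bJ_2d^T\rangle$, with $Q_{22}$ the lower-right $q\times q$ block of the observability Gramian, which does not depend on $b$.) *)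

theory Defs
  imports "HOL-Analysis.Analysis"
begin

text \<open>Columns of matrices in R^(q x m2) are indexed by 'mu + 'mu, so m2 = 2 mu is even.
  J2 = [[0, I],[-I, 0]] in this block indexing.\<close>
definition J2 :: "real ^ ('mu::finite + 'mu) ^ ('mu + 'mu)" where
  "J2 = (\<chi> a b. case (a, b) of
            (Inl i, Inr j) \<Rightarrow> (if i = j then 1 else 0)
          | (Inr i, Inl j) \<Rightarrow> (if i = j then -1 else 0)
          | _ \<Rightarrow> 0)"

definition sym_mat :: "real ^ 'n ^ 'n \<Rightarrow> bool" where
  "sym_mat A \<longleftrightarrow> transpose A = A"

definition antisym_mat :: "real ^ 'n ^ 'n \<Rightarrow> bool" where
  "antisym_mat A \<longleftrightarrow> transpose A = - A"

definition pos_def_mat :: "real ^ 'n ^ 'n \<Rightarrow> bool" where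
  "pos_def_mat A \<longleftrightarrow> (\<forall>x. x \<noteq> 0 \<longrightarrow> x \<bullet> (A *v x) > 0)"

definition frob :: "real ^ 'c ^ 'r \<Rightarrow> real ^ 'c ^ 'r \<Rightarrow> real" where
  "frob X Y = (\<Sum>i\<in>UNIV. \<Sum>j\<in>UNIV. X $ i $ j * Y $ i $ j)"

definition cmat :: "real ^ 'n ^ 'n \<Rightarrow> complex ^ 'n ^ 'n" where
  "cmat A = (\<chi> i j. complex_of_real (A $ i $ j))"

definition eigenvalues_c :: "real ^ 'n ^ 'n \<Rightarrow> complex set" where
  "eigenvalues_c A = {z. \<exists>v :: complex ^ 'n. v \<noteq> 0 \<and> cmat A *v v = z *s v}"

definition spec_rad :: "real ^ 'n ^ 'n \<Rightarrow> real" where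
  "spec_rad A = Max (cmod ` eigenvalues_c A)"

definition self_adjoint_frob :: "(real ^ 'c ^ 'r \<Rightarrow> real ^ 'c ^ 'r) \<Rightarrow> bool" where
  "self_adjoint_frob L \<longleftrightarrow> (\<forall>X Y. frob (L X) Y = frob X (L Y))"

definition pos_def_op :: "(real ^ 'c ^ 'r \<Rightarrow> real ^ 'c ^ 'r) \<Rightarrow> bool" where
  "pos_def_op L \<longleftrightarrow> (\<forall>X. X \<noteq> 0 \<longrightarrow> frob X (L X) > 0)"

end

theory Submission
  imports Defs
begin


lemma frob_inner: "frob X Y = X \<bullet> Y"
  by (simp add: frob_def inner_vec_def)

lemma mat_inner_left:
  fixes A :: "real^'n^'m" and X :: "real^'c^'n" and Y :: "real^'c^'m"
  shows "(A ** X) \<bullet> Y = X \<bullet> (transpose A ** Y)"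
proof -
  have "(A ** X) \<bullet> Y = (\<Sum>i\<in>UNIV. \<Sum>j\<in>UNIV. \<Sum>k\<in>UNIV. A$i$k * X$k$j * Y$i$j)"
    by (simp add: inner_vec_def matrix_matrix_mult_def sum_distrib_right)
  also have "\<dots> = (\<Sum>k\<in>UNIV. \<Sum>j\<in>UNIV. \<Sum>i\<in>UNIV. A$i$k * X$k$j * Y$i$j)"
    apply (subst sum.swap) apply (subst (2) sum.swap) apply (rule sum.cong, simp)
    apply (subst sum.swap) ..
  also have "\<dots> = X \<bullet> (transpose A ** Y)"
    by (simp add: inner_vec_def matrix_matrix_mult_def transpose_def sum_distrib_left mult_ac)
  finally show ?thesis .
qed

lemma mat_inner_right:
  fixes B :: "real^'d^'c" and X :: "real^'c^'n" and Y :: "real^'d^'n"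
  shows "(X ** B) \<bullet> Y = X \<bullet> (Y ** transpose B)"
proof -
  have "(X ** B) \<bullet> Y = (\<Sum>i\<in>UNIV. \<Sum>j\<in>UNIV. \<Sum>k\<in>UNIV. X$i$k * B$k$j * Y$i$j)"
    by (simp add: inner_vec_def matrix_matrix_mult_def sum_distrib_right)
  also have "\<dots> = (\<Sum>i\<in>UNIV. \<Sum>k\<in>UNIV. \<Sum>j\<in>UNIV. X$i$k * B$k$j * Y$i$j)"
    by (rule sum.cong, simp, rule sum.swap)
  also have "\<dots> = X \<bullet> (Y ** transpose B)"
    by (simp add: inner_vec_def matrix_matrix_mult_def transpose_def sum_distrib_left mult_ac)
  finally show ?thesis .
qed

lemma mat_neg_left: "(- A) ** (B::'a::comm_ring_1^'n^'m) = - (A ** B)"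
  by (simp add: vec_eq_iff matrix_matrix_mult_def sum_negf)
lemma mat_neg_right: "A ** (- B::'a::comm_ring_1^'n^'m) = - (A ** B)"
  by (simp add: vec_eq_iff matrix_matrix_mult_def sum_negf)
lemma mat_diff_right: "(A - B) ** (C::'a::comm_ring_1^'n^'m) = A ** C - B ** C"
  by (simp add: vec_eq_iff matrix_matrix_mult_def sum_subtractf algebra_simps)

lemma transpose_J2: "transpose (J2 :: real ^ ('mu::finite + 'mu) ^ ('mu + 'mu)) = - J2"
  by (auto simp: vec_eq_iff transpose_def J2_def split: sum.splits)


lemma vec_inner_left:
  fixes A :: "real^'n^'m"
  shows "(A *v x) \<bullet> y = x \<bullet> (transpose A *v y)"
proof -
  have "(A *v x) \<bullet> y = (\<Sum>i\<in>UNIV. \<Sum>k\<in>UNIV. A$i$k * x$k * y$i)"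
    by (simp add: inner_vec_def matrix_vector_mult_def sum_distrib_right)
  also have "\<dots> = (\<Sum>k\<in>UNIV. \<Sum>i\<in>UNIV. A$i$k * x$k * y$i)" by (rule sum.swap)
  also have "\<dots> = x \<bullet> (transpose A *v y)"
    by (simp add: inner_vec_def matrix_vector_mult_def transpose_def sum_distrib_left mult_ac)
  finally show ?thesis .
qed

lemma antisym_quad: "antisym_mat Xi \<Longrightarrow> a \<bullet> (Xi *v a) = 0"
  using vec_inner_left[of Xi a a] unfolding antisym_mat_def
  by (simp add: inner_commute matrix_vector_mult_def vec_eq_iff inner_vec_def sum_negf)

lemma sym_bil: "sym_mat Q \<Longrightarrow> a \<bullet> (Q *v b) = b \<bullet> (Q *v (a::real^'n))"
  using vec_inner_left[of Q b a] unfolding sym_mat_def by (simp add: inner_commute)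

lemma T_sa:
  assumes "antisym_mat Xi"
  shows "(Xi ** X ** (J2::real ^ ('mu::finite + 'mu) ^ ('mu + 'mu))) \<bullet> Y = X \<bullet> (Xi ** Y ** J2)"
proof -
  have "(Xi ** X ** J2) \<bullet> Y = (Xi ** X) \<bullet> (Y ** transpose J2)" by (rule mat_inner_right)
  also have "\<dots> = X \<bullet> (transpose Xi ** (Y ** transpose J2))" by (rule mat_inner_left)
  also have "\<dots> = X \<bullet> (Xi ** Y ** J2)"
    using assms unfolding antisym_mat_def
    by (simp add: transpose_J2 mat_neg_left mat_neg_right matrix_mul_assoc)
  finally show ?thesis .
qed

lemma sum_UNIV_Plus: "(\<Sum>c\<in>(UNIV::('a::finite+'b::finite) set). f c) = (\<Sum>i\<in>UNIV. f (Inl i)) + (\<Sum>i\<in>UNIV. f (Inr i))"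
  using sum.Plus[of "UNIV::'a set" "UNIV::'b set" f] by (simp add: comp_def)

lemma Q_sa: "sym_mat Q \<Longrightarrow> (Q ** X) \<bullet> Y = X \<bullet> (Q ** (Y::real^'c^'n))"
  unfolding sym_mat_def by (simp add: mat_inner_left)

lemma lin_left: "linear (\<lambda>X::real^'c^'n. A ** X)"
  by (rule linearI) (simp_all add: vec_eq_iff matrix_matrix_mult_def sum.distrib algebra_simps sum_distrib_left)

lemma lin_both: "linear (\<lambda>X::real^'c^'n. A ** X ** B)"
  by (rule linearI) (simp_all add: vec_eq_iff matrix_matrix_mult_def sum.distrib algebra_simps sum_distrib_left sum_distrib_right)

lemma inner_columns: "(X::real^'c^'n) \<bullet> Y = (\<Sum>c\<in>UNIV. column c X \<bullet> column c Y)"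
  by (simp add: inner_vec_def column_def) (rule sum.swap)

lemma column_mult: "column c (A ** X) = A *v column c X"
  by (simp add: vec_eq_iff column_def matrix_matrix_mult_def matrix_vector_mult_def)

lemma column_J2_Inl: "column (Inl k) (X ** (J2::real ^ ('mu::finite + 'mu) ^ ('mu + 'mu))) = - column (Inr k) X"
  by (simp add: vec_eq_iff column_def matrix_matrix_mult_def J2_def sum_UNIV_Plus if_distrib[of "(*) _"] cong: if_cong)

lemma column_J2_Inr: "column (Inr k) (X ** (J2::real ^ ('mu::finite + 'mu) ^ ('mu + 'mu))) = column (Inl k) X"
  by (simp add: vec_eq_iff column_def matrix_matrix_mult_def J2_def sum_UNIV_Plus if_distrib[of "(*) _"] cong: if_cong)

lemma column_scaleR: "column c (r *\<^sub>R X) = r *\<^sub>R column c X"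
  by (simp add: vec_eq_iff column_def)

lemma zero_columns: "(X = 0) \<longleftrightarrow> (\<forall>c. column c X = 0)"
  by (auto simp: vec_eq_iff column_def)


lemma psd_zero:
  fixes f :: "'a::real_inner \<Rightarrow> 'a"
  assumes lin: "linear f" and sa: "\<And>x y. f x \<bullet> y = x \<bullet> f y"
    and psd: "\<And>x. x \<bullet> f x \<ge> 0" and z: "x0 \<bullet> f x0 = 0"
  shows "f x0 = 0"
proof -
  let ?y = "f x0"
  define a where "a = ?y \<bullet> ?y"
  define c where "c = ?y \<bullet> f ?y"
  have c0: "c \<ge> 0" unfolding c_def by (rule psd)
  have a0: "a \<ge> 0" unfolding a_def by simp
  have key: "0 \<le> - 2 * t * a + t^2 * c" for t
  proof -
    have "0 \<le> (x0 - t *\<^sub>R ?y) \<bullet> f (x0 - t *\<^sub>R ?y)" by (rule psd)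
    also have "\<dots> = x0 \<bullet> f x0 - t * (x0 \<bullet> f ?y) - t * (?y \<bullet> f x0) + t^2 * (?y \<bullet> f ?y)"
      by (simp add: linear_diff[OF lin] linear_scale[OF lin] inner_diff_left inner_diff_right
          algebra_simps power2_eq_square)
    also have "x0 \<bullet> f ?y = a" unfolding a_def using sa[of x0 ?y] by simp
    finally show ?thesis using z unfolding a_def c_def by simp
  qed
  define t where "t = a/(c+1)"
  have "0 \<le> (c+1)^2 * (- 2 * t * a + t^2 * c)" using key[of t] c0 by simp
  also have "(c+1)^2 * (- 2 * t * a + t^2 * c) = a^2 * (- c - 2)"
  proof -
    have cn: "c + 1 \<noteq> 0" using c0 by simp
    have ht: "t * (c+1) = a" unfolding t_def using cn by simp
    have "(c+1)^2 * (- 2 * t * a + t^2 * c) = - 2 * a * (t*(c+1)) * (c+1) + (t*(c+1))^2 * c"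
      by (simp add: algebra_simps power2_eq_square)
    also have "\<dots> = a^2 * (- c - 2)" unfolding ht by (simp add: algebra_simps power2_eq_square)
    finally show ?thesis .
  qed
  finally have "0 \<le> a^2 * (- c - 2)" .
  hence "a = 0" using c0
    by (smt (verit) mult_pos_neg zero_less_power2)
  thus ?thesis unfolding a_def by simp
qed

lemma max_ratio:
  fixes P T :: "'a::euclidean_space \<Rightarrow> 'a"
  assumes lP: "linear P" and lT: "linear T" and pd: "\<And>x. x \<noteq> 0 \<Longrightarrow> x \<bullet> P x > 0"
    and nt: "(y1::'a) \<noteq> 0"
  shows "\<exists>x0 lam. x0 \<noteq> 0 \<and> x0 \<bullet> T x0 = lam * (x0 \<bullet> P x0) \<and> (\<forall>y. y \<bullet> T y \<le> lam * (y \<bullet> P y))"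
proof -
  define r where "r x = (x \<bullet> T x) / (x \<bullet> P x)" for x
  have cP: "continuous_on UNIV P" and cT: "continuous_on UNIV T"
    using lP lT by (auto intro: linear_continuous_on simp: linear_conv_bounded_linear)
  have "continuous_on (sphere 0 1) r"
    unfolding r_def
    apply (rule continuous_on_divide)
    apply (intro continuous_intros continuous_on_subset[OF cT] continuous_on_subset[OF cP]; simp)
    apply (intro continuous_intros continuous_on_subset[OF cT] continuous_on_subset[OF cP]; simp)
    using pd by (metis (no_types) less_irrefl mem_sphere_0 norm_zero zero_neq_one)
  moreover have "sphere (0::'a) 1 \<noteq> {}"
    using nt by (auto intro!: exI[of _ "y1 /\<^sub>R norm y1"])
  ultimately obtain x0 where x0: "x0 \<in> sphere 0 1" and mx: "\<And>y. y \<in> sphere 0 1 \<Longrightarrow> r y \<le> r x0"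
    using continuous_attains_sup[OF compact_sphere] by blast
  have x00: "x0 \<noteq> 0" using x0 by auto
  have scale: "r (c *\<^sub>R x) = r x" if "c \<noteq> 0" for c x
    using that by (simp add: r_def linear_scale[OF lP] linear_scale[OF lT])
  have "y \<bullet> T y \<le> r x0 * (y \<bullet> P y)" for y
  proof (cases "y = 0")
    case True then show ?thesis by (simp add: linear_0[OF lT] linear_0[OF lP])
  next
    case False
    have "r y = r ((1 / norm y) *\<^sub>R y)" using False by (simp add: scale)
    also have "\<dots> \<le> r x0" using False by (intro mx) simp
    finally have "(y \<bullet> T y) / (y \<bullet> P y) \<le> r x0" unfolding r_def .
    then show ?thesis using pd[OF False] by (simp add: divide_le_eq)
  qed
  moreover have "x0 \<bullet> T x0 = r x0 * (x0 \<bullet> P x0)"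
    using pd[OF x00] by (simp add: r_def)
  ultimately show ?thesis using x00 by blast
qed


lemma mv_sum_scale: "(B::'a::comm_ring_1^'n^'m) *v (\<Sum>z\<in>F. c z *s f z) = (\<Sum>z\<in>F. c z *s (B *v f z))"
  apply (simp add: vec_eq_iff matrix_vector_mult_def sum_component sum_distrib_left mult_ac)
  apply (intro allI)
  apply (rule sum.swap)
  done

lemma eig_indep:
  fixes B :: "complex^'n^'n"
  assumes "finite F" and "\<And>z. z\<in>F \<Longrightarrow> f z \<noteq> 0 \<and> B *v f z = z *s f z"
    and "(\<Sum>z\<in>F. c z *s f z) = 0"
  shows "\<forall>z\<in>F. c z = 0"
  using assms
proof (induction F arbitrary: c rule: finite_induct)
  case empty then show ?case by simp
next
  case (insert w F)
  have e0: "(\<Sum>z\<in>F. c z *s f z) + c w *s f w = 0"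
    using insert.prems(2) insert.hyps by (simp add: add.commute)
  have "B *v ((\<Sum>z\<in>F. c z *s f z) + c w *s f w) = 0" using e0 by simp
  hence e1: "(\<Sum>z\<in>F. (c z * z) *s f z) + (c w * w) *s f w = 0"
    using insert.prems(1)
    by (simp add: matrix_vector_right_distrib mv_sum_scale vec.scale
        vector_smult_assoc mult_ac cong: sum.cong)
  have e2: "(\<Sum>z\<in>F. (c z * w) *s f z) + (c w * w) *s f w = 0"
    using arg_cong[OF e0, of "(*s) w"]
    by (simp add: vector_ssub_ldistrib vec.scale_sum_right vector_smult_assoc vector_sadd_rdistrib
        vec.scale_right_distrib mult_ac)
  have "(\<Sum>z\<in>F. (c z * (z - w)) *s f z) = 0"
    using arg_cong2[OF e1 e2, of "(-)"]
    by (simp add: sum_subtractf[symmetric] algebra_simps vec.scale_left_diff_distrib)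
  hence h: "\<forall>z\<in>F. c z * (z - w) = 0"
    using insert.IH[of "\<lambda>z. c z * (z - w)"] insert.prems(1) by blast
  hence hF: "\<forall>z\<in>F. c z = 0" using insert.hyps(2) by auto
  hence "c w *s f w = 0" using e0 by simp
  hence "c w = 0" using insert.prems(1)[of w] by (simp add: vec.scale_eq_0_iff)
  with hF show ?case by simp
qed

lemma eig_finite:
  fixes B :: "complex^'n^'n"
  shows "finite {z. \<exists>v. v \<noteq> 0 \<and> B *v v = z *s v}"
proof -
  define S where "S = {z. \<exists>v. v \<noteq> 0 \<and> B *v v = z *s v}"
  define f where "f z = (SOME v. v \<noteq> 0 \<and> B *v v = z *s v)" for z
  have f: "f z \<noteq> 0 \<and> B *v f z = z *s f z" if "z \<in> S" for z
    using that unfolding S_def f_def by (metis (mono_tags, lifting) mem_Collect_eq someI)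
  have inj: "inj_on f S"
  proof (rule inj_onI)
    fix z1 z2 assume "z1 \<in> S" "z2 \<in> S" "f z1 = f z2"
    then have "z1 *s f z1 = z2 *s f z1" "f z1 \<noteq> 0" using f by metis+
    then show "z1 = z2" by (metis vec.scale_right_imp_eq)
  qed
  have "vec.independent (f ` S)"
    unfolding vec.independent_explicit_finite_subsets
  proof (intro allI impI ballI)
    fix T u v assume T: "T \<subseteq> f ` S" "finite T" and su: "(\<Sum>v\<in>T. u v *s v) = 0" and v: "v \<in> T"
    define F where "F = {z\<in>S. f z \<in> T}"
    have TF: "T = f ` F" using T(1) unfolding F_def by auto
    have injF: "inj_on f F" using inj unfolding F_def by (auto intro: inj_on_subset)
    have fF: "finite F" using T(2) TF injF by (simp add: finite_image_iff)
    have "(\<Sum>z\<in>F. (u \<circ> f) z *s f z) = 0" using su unfolding TF sum.reindex[OF injF] by (simp add: comp_def)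
    hence "\<forall>z\<in>F. (u \<circ> f) z = 0" by (intro eig_indep[OF fF, where B=B]) (use f F_def in auto)
    then show "u v = 0" using v TF by auto
  qed
  hence "finite (f ` S)" by (rule vec.finiteI_independent)
  hence "finite S" using inj by (simp add: finite_image_iff)
  thus ?thesis unfolding S_def .
qed


lemma mv_neg: "(A::'a::comm_ring_1^'n^'m) *v (- x) = - (A *v x)"
  by (simp add: vec_eq_iff matrix_vector_mult_def sum_negf)

lemma eig_from_real:
  fixes Q Qi Xi :: "real^'n^'n"
  assumes QiQ: "Qi ** Q = mat 1" and h1: "Xi *v u = lam *\<^sub>R (Q *v w)"
    and h2: "Xi *v w = (- lam) *\<^sub>R (Q *v u)" and nz: "u \<noteq> 0 \<or> w \<noteq> 0"
  shows "Complex 0 (-lam) \<in> eigenvalues_c (Qi ** Xi)"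
proof -
  define M where "M = Qi ** Xi"
  have Mu: "M *v u = lam *\<^sub>R w"
    unfolding M_def matrix_vector_mul_assoc[symmetric] h1
    by (simp add: scalar_mult_eq_scaleR[symmetric] vec.scale matrix_vector_mul_assoc QiQ mv_neg)
  have Mw: "M *v w = (- lam) *\<^sub>R u"
    unfolding M_def matrix_vector_mul_assoc[symmetric] h2
    by (simp add: scalar_mult_eq_scaleR[symmetric] vec.scale matrix_vector_mul_assoc QiQ mv_neg)
  have cu: "(\<Sum>j\<in>UNIV. M$i$j * u$j) = lam * w$i" for i
    using arg_cong[OF Mu, of "\<lambda>x. x$i"] by (simp add: matrix_vector_mult_def)
  have cw: "(\<Sum>j\<in>UNIV. M$i$j * w$j) = - lam * u$i" for i
    using arg_cong[OF Mw, of "\<lambda>x. x$i"] by (simp add: matrix_vector_mult_def)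
  define v :: "complex^'n" where "v = (\<chi> i. Complex (u$i) (w$i))"
  have "v \<noteq> 0" using nz by (auto simp: v_def vec_eq_iff complex_eq_iff)
  moreover have "cmat M *v v = Complex 0 (-lam) *s v"
    by (simp add: vec_eq_iff complex_eq_iff matrix_vector_mult_def cmat_def v_def cu cw)
  ultimately show ?thesis unfolding eigenvalues_c_def M_def by blast
qed

lemma real_from_eig:
  assumes "z \<in> eigenvalues_c M"
  shows "\<exists>a b. (a \<noteq> 0 \<or> b \<noteq> 0) \<and> M *v a = Re z *\<^sub>R a - Im z *\<^sub>R b \<and> M *v b = Re z *\<^sub>R b + Im z *\<^sub>R a"
proof -
  obtain v where v: "v \<noteq> 0" "cmat M *v v = z *s v" using assms unfolding eigenvalues_c_def by auto
  define a where "a = (\<chi> i. Re (v$i))"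
  define b where "b = (\<chi> i. Im (v$i))"
  have c: "(cmat M *v v)$i = (z *s v)$i" for i using v(2) by simp
  have "a \<noteq> 0 \<or> b \<noteq> 0" using v(1) by (auto simp: a_def b_def vec_eq_iff complex_eq_iff)
  moreover have "M *v a = Re z *\<^sub>R a - Im z *\<^sub>R b"
    using arg_cong[OF c, of Re] by (simp add: vec_eq_iff a_def b_def matrix_vector_mult_def cmat_def)
  moreover have "M *v b = Re z *\<^sub>R b + Im z *\<^sub>R a"
    using arg_cong[OF c, of Im] by (simp add: vec_eq_iff a_def b_def matrix_vector_mult_def cmat_def)
  ultimately show ?thesis by blast
qed

definition mk :: "'mu \<Rightarrow> real^'q \<Rightarrow> real^'q \<Rightarrow> real^('mu::finite+'mu)^'q" where
  "mk k u w = (\<chi> i c. if c = Inl k then u$i else if c = Inr k then w$i else 0)"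

lemma col_mk_Inl: "column (Inl j) (mk k u w) = (if j = k then u else 0)"
  by (auto simp: mk_def column_def vec_eq_iff)
lemma col_mk_Inr: "column (Inr j) (mk k u w) = (if j = k then w else 0)"
  by (auto simp: mk_def column_def vec_eq_iff)

lemma mk_nz: "u \<noteq> 0 \<or> w \<noteq> 0 \<Longrightarrow> mk k u w \<noteq> 0"
  using zero_columns[of "mk k u w"] col_mk_Inl[of k k u w] col_mk_Inr[of k k u w] by auto

lemma mk_Q: "(mk k u w) \<bullet> (Q ** mk k u w) = u \<bullet> (Q *v u) + w \<bullet> (Q *v w)"
  by (simp add: inner_columns[of "mk k u w"] column_mult sum_UNIV_Plus col_mk_Inl col_mk_Inr
      if_distrib[of "\<lambda>x. x \<bullet> _"] cong: if_cong)

lemma mk_T: "(mk k u w) \<bullet> (Xi ** mk k u w ** J2) = w \<bullet> (Xi *v u) - u \<bullet> (Xi *v w)"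
  by (simp add: inner_columns[of "mk k u w"] matrix_mul_assoc[symmetric] column_mult[of _ Xi] sum_UNIV_Plus
      column_J2_Inl column_J2_Inr col_mk_Inl col_mk_Inr mv_neg sum_negf
      if_distrib[of "\<lambda>x. x \<bullet> _"] cong: if_cong)




lemma lin_comb: "linear P \<Longrightarrow> linear T \<Longrightarrow> linear (\<lambda>x. c *\<^sub>R P x - T x)"
  by (rule linearI) (simp_all add: linear_add linear_scale algebra_simps)

lemma mv_lin: "(A::real^'n^'m) *v (x *\<^sub>R a + y *\<^sub>R b) = x *\<^sub>R (A *v a) + y *\<^sub>R (A *v b)"
  by (simp add: vec_eq_iff matrix_vector_mult_def sum.distrib sum_distrib_left algebra_simps)

theorem mainTheorem9:
  fixes Q22 Xi :: "real ^ 'q ^ 'q"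
  assumes "sym_mat Q22" and "pos_def_mat Q22" and "antisym_mat Xi"
  defines "L \<equiv> (\<lambda>X :: real ^ ('mu::finite + 'mu) ^ 'q. Q22 ** X - Xi ** X ** J2)"
  shows "linear L \<and> self_adjoint_frob L \<and>
         (pos_def_op L \<longleftrightarrow> spec_rad (matrix_inv Q22 ** Xi) < 1)"
proof -
  note sQ = assms(1) and pQ = assms(2) and aX = assms(3)
  define P where "P = (\<lambda>X :: real ^ ('mu::finite + 'mu) ^ 'q. Q22 ** X)"
  define T where "T = (\<lambda>X :: real ^ ('mu::finite + 'mu) ^ 'q. Xi ** X ** J2)"
  have LPT: "L X = P X - T X" for X unfolding L_def P_def T_def by simp
  have lP: "linear P" unfolding P_def by (rule lin_left)
  have lT: "linear T" unfolding T_def by (rule lin_both)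
  have saP: "P X \<bullet> Y = X \<bullet> P Y" for X Y unfolding P_def by (rule Q_sa[OF sQ])
  have saT: "T X \<bullet> Y = X \<bullet> T Y" for X Y unfolding T_def by (rule T_sa[OF aX])
  have linL: "linear L"
    using lin_comb[OF lP lT, of 1] unfolding LPT by simp
  have saL: "self_adjoint_frob L"
    unfolding self_adjoint_frob_def frob_inner LPT
    by (simp add: inner_diff_left inner_diff_right saP saT)
  have frobL: "frob X (L X) = X \<bullet> P X - X \<bullet> T X" for X
    unfolding frob_inner LPT by (simp add: inner_diff_right)
  have pdv: "x \<noteq> 0 \<Longrightarrow> x \<bullet> (Q22 *v x) > 0" for x using pQ unfolding pos_def_mat_def by blast
  have psdv: "0 \<le> x \<bullet> (Q22 *v x)" for x
  proof (cases "x = 0")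
    case True then show ?thesis by simp
  next
    case False then show ?thesis using pdv[of x] by simp
  qed
  have pdP: "X \<bullet> P X > 0" if "X \<noteq> 0" for X
  proof -
    have "\<not> (\<forall>c. column c X = 0)" using that zero_columns[of X] by simp
    then obtain c where c: "column c X \<noteq> 0" by blast
    have e: "X \<bullet> P X = (\<Sum>c\<in>UNIV. column c X \<bullet> (Q22 *v column c X))"
      unfolding P_def inner_columns[of X] column_mult ..
    have "0 < (\<Sum>c\<in>UNIV. column c X \<bullet> (Q22 *v column c X))"
      by (rule sum_pos2[of UNIV c]) (use pdv c psdv in auto)
    then show ?thesis using e by simp
  qed
  have "\<exists>B. B ** Q22 = mat 1"
    unfolding matrix_left_invertible_ker using pdv by force
  hence invQ: "invertible Q22" by (simp add: invertible_left_inverse)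
  define Qi where "Qi = matrix_inv Q22"
  have QQi: "Q22 ** Qi = mat 1 \<and> Qi ** Q22 = mat 1"
    using invQ unfolding invertible_def Qi_def matrix_inv_def by (rule someI_ex)
  define M where "M = Qi ** Xi"
  have QM: "Q22 ** M = Xi" unfolding M_def matrix_mul_assoc using QQi by simp
  define E where "E = eigenvalues_c M"
  have finE: "finite E" unfolding E_def eigenvalues_c_def by (rule eig_finite)
  define y1 :: "real ^ ('mu + 'mu) ^ 'q" where "y1 = (\<chi> i j. 1)"
  have "y1 \<noteq> 0" by (simp add: y1_def vec_eq_iff)
  then obtain X0 lam where X0: "X0 \<noteq> 0" "X0 \<bullet> T X0 = lam * (X0 \<bullet> P X0)"
    and mx: "\<And>Y. Y \<bullet> T Y \<le> lam * (Y \<bullet> P Y)"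
    using max_ratio[OF lP lT pdP] by blast
  have "(\<lambda>X. lam *\<^sub>R P X - T X) X0 = 0"
  proof (rule psd_zero[OF lin_comb[OF lP lT]])
    show "(lam *\<^sub>R P X - T X) \<bullet> Y = X \<bullet> (lam *\<^sub>R P Y - T Y)" for X Y
      by (simp add: inner_diff_left inner_diff_right saP saT)
    show "0 \<le> X \<bullet> (lam *\<^sub>R P X - T X)" for X
      using mx[of X] by (simp add: inner_diff_right)
    show "X0 \<bullet> (lam *\<^sub>R P X0 - T X0) = 0"
      using X0 by (simp add: inner_diff_right)
  qed
  hence eqm: "lam *\<^sub>R (Q22 ** X0) = Xi ** X0 ** J2" unfolding P_def T_def by simp
  obtain k where k: "column (Inl k) X0 \<noteq> 0 \<or> column (Inr k) X0 \<noteq> 0"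
  proof -
    have "\<not> (\<forall>c. column c X0 = 0)" using X0(1) zero_columns[of X0] by simp
    then obtain c where "column c X0 \<noteq> 0" by blast
    then show ?thesis using that by (cases c) auto
  qed
  define u where "u = column (Inl k) X0"
  define w where "w = column (Inr k) X0"
  have e1: "Xi *v u = lam *\<^sub>R (Q22 *v w)"
    using arg_cong[OF eqm, of "column (Inr k)"]
    by (simp add: column_scaleR column_mult[of _ Xi] column_mult[of _ Q22] matrix_mul_assoc[symmetric] column_J2_Inr u_def w_def)
  have e2: "Xi *v w = (- lam) *\<^sub>R (Q22 *v u)"
    using arg_cong[OF eqm, of "column (Inl k)"]
    by (simp add: column_scaleR column_mult[of _ Xi] column_mult[of _ Q22] matrix_mul_assoc[symmetric] column_J2_Inl u_def w_def mv_neg)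
  have lamE: "Complex 0 (-lam) \<in> E"
    unfolding E_def M_def by (rule eig_from_real[OF conjunct2[OF QQi] e1 e2]) (use k u_def w_def in auto)
  have srE: "spec_rad M = Max (cmod ` E)" unfolding spec_rad_def E_def ..
  have "pos_def_op L \<longleftrightarrow> spec_rad M < 1"
  proof
    assume pd: "pos_def_op L"
    have "cmod z < 1" if z: "z \<in> E" for z
    proof -
      obtain a b where ab: "a \<noteq> 0 \<or> b \<noteq> 0" "M *v a = Re z *\<^sub>R a + (- Im z) *\<^sub>R b"
        "M *v b = Re z *\<^sub>R b + Im z *\<^sub>R a"
        using real_from_eig[OF z[unfolded E_def]] by (auto simp: algebra_simps)
      define x where "x = Re z"
      define y where "y = Im z"
      define qa where "qa = a \<bullet> (Q22 *v a)"
      define qb where "qb = b \<bullet> (Q22 *v b)"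
      define qab where "qab = a \<bullet> (Q22 *v b)"
      have qba: "b \<bullet> (Q22 *v a) = qab" unfolding qab_def by (rule sym_bil[OF sQ])
      have Xa: "Xi *v a = x *\<^sub>R (Q22 *v a) + (- y) *\<^sub>R (Q22 *v b)"
        unfolding QM[symmetric] matrix_vector_mul_assoc[symmetric] ab(2) mv_lin x_def y_def ..
      have Xb: "Xi *v b = x *\<^sub>R (Q22 *v b) + y *\<^sub>R (Q22 *v a)"
        unfolding QM[symmetric] matrix_vector_mul_assoc[symmetric] ab(3) mv_lin x_def y_def ..
      have "a \<bullet> (Xi *v a) = 0" "b \<bullet> (Xi *v b) = 0" using antisym_quad[OF aX] by auto
      hence h1: "x * qa - y * qab = 0" "x * qb + y * qab = 0"
        unfolding Xa Xb by (simp_all add: inner_add_right inner_diff_right qa_def qb_def qab_def qba)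
      have qa0: "qa \<ge> 0" "qb \<ge> 0" unfolding qa_def qb_def by (rule psdv)+
      have qpos: "qa + qb > 0" using ab(1) pdv qa0 unfolding qa_def qb_def
        by (metis add_pos_nonneg add_nonneg_pos)
      have "x * (qa + qb) = 0" using h1 by (simp add: algebra_simps)
      hence x0: "x = 0" using qpos by simp
      have iab: "a \<bullet> (Xi *v b) = y * qa" "b \<bullet> (Xi *v a) = - y * qb"
        unfolding Xa Xb using x0 by (simp_all add: inner_add_right inner_diff_right qa_def qb_def qab_def qba)
      have "\<not> y \<ge> 1"
      proof
        assume y1: "y \<ge> 1"
        have "mk k b a \<noteq> 0" using ab(1) by (intro mk_nz) auto
        hence "frob (mk k b a) (L (mk k b a)) > 0" using pd unfolding pos_def_op_def by blast
        moreover have "frob (mk k b a) (L (mk k b a)) = (1 - y) * (qa + qb)"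
          unfolding frobL P_def T_def mk_Q mk_T iab by (simp add: qa_def qb_def algebra_simps)
        moreover have "(1 - y) * (qa + qb) \<le> 0" using y1 qpos by (simp add: mult_nonpos_nonneg)
        ultimately show False by linarith
      qed
      moreover have "\<not> y \<le> -1"
      proof
        assume y1: "y \<le> -1"
        have "mk k a b \<noteq> 0" using ab(1) by (intro mk_nz) auto
        hence "frob (mk k a b) (L (mk k a b)) > 0" using pd unfolding pos_def_op_def by blast
        moreover have "frob (mk k a b) (L (mk k a b)) = (1 + y) * (qa + qb)"
          unfolding frobL P_def T_def mk_Q mk_T iab by (simp add: qa_def qb_def algebra_simps)
        moreover have "(1 + y) * (qa + qb) \<le> 0" using y1 qpos by (simp add: mult_nonpos_nonneg)
        ultimately show False by linarith
      qed
      moreover have "cmod z = \<bar>y\<bar>" using x0 unfolding x_def y_def by (simp add: cmod_def)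
      ultimately show ?thesis by simp
    qed
    moreover have "E \<noteq> {}" using lamE by blast
    ultimately show "spec_rad M < 1" unfolding srE using finE by (simp add: Max_less_iff)
  next
    assume sr: "spec_rad M < 1"
    show "pos_def_op L"
      unfolding pos_def_op_def
    proof (intro allI impI)
      fix X :: "real ^ ('mu + 'mu) ^ 'q" assume X: "X \<noteq> 0"
      show "frob X (L X) > 0"
      proof (rule ccontr)
        assume "\<not> frob X (L X) > 0"
        hence "X \<bullet> P X \<le> X \<bullet> T X" unfolding frobL by simp
        also have "\<dots> \<le> lam * (X \<bullet> P X)" by (rule mx)
        finally have "1 * (X \<bullet> P X) \<le> lam * (X \<bullet> P X)" by simp
        hence l1: "1 \<le> lam" using pdP[OF X] by (simp add: mult_le_cancel_right)
        have "cmod (Complex 0 (-lam)) \<le> spec_rad M"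
          unfolding srE using finE lamE by (intro Max_ge) auto
        moreover have "cmod (Complex 0 (-lam)) = lam" using l1 by (simp add: cmod_def)
        ultimately show False using sr l1 by simp
      qed
    qed
  qed
  thus ?thesis using linL saL unfolding M_def Qi_def by simp
qed

end
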